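(* Let $G$ be a graph of tree-width $k\geq 3$. Then the minor-3-core of $G$ also has tree-width $k$.
   Context: Graphs are simple and undirected. A minor of $G$ is a graph obtained from $G$ by vertex contractions (contracting a vertex $u$ into a neighbour $v$, i.e. an edge contraction keeping the name $v$) and subgraph operations. A minor-3-core of $G$ is a minor $H$ of $G$ with minimum degree at least $3$ such that no minor of $G$ with minimum degree at least $3$ has more edges than $H$; all minor-3-cores of $G$ are isomorphic, so one speaks of the minor-3-core. Equivalently, it is the graph obtained by repeatedly contracting a vertex of degree at most $2$ into a neighbour and deleting isolated vertices until neither operation applies. *)

theory Defs
  imports Main
begin

type_synonym 'a graph = "'a set \<times> 'a set set"

definition simple_graph :: "'a graph \<Rightarrow> bool" where
  "simple_graph G \<longleftrightarrow> finite (fst G) \<and>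
     (\<forall>e\<in>snd G. \<exists>u v. u \<noteq> v \<and> e = {u, v} \<and> u \<in> fst G \<and> v \<in> fst G)"

definition degree :: "'a graph \<Rightarrow> 'a \<Rightarrow> nat" where
  "degree G v = card {w. {v, w} \<in> snd G}"

definition min_degree_ge :: "'a graph \<Rightarrow> nat \<Rightarrow> bool" where
  "min_degree_ge G d \<longleftrightarrow> (\<forall>v\<in>fst G. d \<le> degree G v)"

definition subgraph :: "'a graph \<Rightarrow> 'a graph \<Rightarrow> bool" where
  "subgraph H G \<longleftrightarrow> simple_graph H \<and> fst H \<subseteq> fst G \<and> snd H \<subseteq> snd G"

text \<open>Contracting vertex u into its neighbour v (the result keeps the name v).\<close>
definition contract :: "'a graph \<Rightarrow> 'a \<Rightarrow> 'a \<Rightarrow> 'a graph" where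
  "contract G u v = (fst G - {u},
     {e\<in>snd G. u \<notin> e} \<union> {{v, w} | w. {u, w} \<in> snd G \<and> w \<noteq> v})"

inductive is_minor :: "'a graph \<Rightarrow> 'a graph \<Rightarrow> bool" where
  refl: "is_minor G G"
| sub: "is_minor G H \<Longrightarrow> subgraph H' H \<Longrightarrow> is_minor G H'"
| contr: "is_minor G H \<Longrightarrow> {u, v} \<in> snd H \<Longrightarrow> u \<noteq> v \<Longrightarrow> is_minor G (contract H u v)"

definition minor_3_core :: "'a graph \<Rightarrow> 'a graph \<Rightarrow> bool" where
  "minor_3_core G H \<longleftrightarrow> is_minor G H \<and> min_degree_ge H 3 \<and>
     (\<forall>H'. is_minor G H' \<and> min_degree_ge H' 3 \<longrightarrow> card (snd H') \<le> card (snd H))"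

definition connected_in :: "'b set set \<Rightarrow> 'b set \<Rightarrow> bool" where
  "connected_in F S \<longleftrightarrow>
     (\<forall>x\<in>S. \<forall>y\<in>S. (x, y) \<in> ({(a, b). a \<in> S \<and> b \<in> S \<and> {a, b} \<in> F})\<^sup>*)"

text \<open>A (finite) tree: a nonempty connected graph with |E| = |V| - 1. Tree nodes are naturals,
  which loses no generality since every finite tree is isomorphic to one on naturals.\<close>
definition is_tree :: "nat graph \<Rightarrow> bool" where
  "is_tree T \<longleftrightarrow> simple_graph T \<and> fst T \<noteq> {} \<and> connected_in (snd T) (fst T) \<and>
     card (snd T) + 1 = card (fst T)"

definition tree_decomposition :: "'a graph \<Rightarrow> nat graph \<Rightarrow> (nat \<Rightarrow> 'a set) \<Rightarrow> bool" where
  "tree_decomposition G T B \<longleftrightarrow> is_tree T \<and>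
     (\<forall>v\<in>fst G. \<exists>t\<in>fst T. v \<in> B t) \<and>
     (\<forall>e\<in>snd G. \<exists>t\<in>fst T. e \<subseteq> B t) \<and>
     (\<forall>v\<in>fst G. connected_in (snd T) {t\<in>fst T. v \<in> B t})"

definition has_tw_at_most :: "'a graph \<Rightarrow> nat \<Rightarrow> bool" where
  "has_tw_at_most G k \<longleftrightarrow>
     (\<exists>T B. tree_decomposition G T B \<and> (\<forall>t\<in>fst T. card (B t) \<le> k + 1 \<and> finite (B t)))"

definition treewidth :: "'a graph \<Rightarrow> nat" where
  "treewidth G = (LEAST k. has_tw_at_most G k)"

end

theory Submission
  imports Defs
begin


definition crel :: "'b set set \<Rightarrow> 'b set \<Rightarrow> ('b \<times> 'b) set" where
  "crel F S = {(a, b). a \<in> S \<and> b \<in> S \<and> {a, b} \<in> F}"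

lemma conn_iff: "connected_in F S \<longleftrightarrow> (\<forall>x\<in>S. \<forall>y\<in>S. (x, y) \<in> (crel F S)\<^sup>*)"
  by (simp add: connected_in_def crel_def)

lemma rtrancl_map_gen:
  assumes "(a, b) \<in> R\<^sup>*" and "\<And>p q. (p, q) \<in> R \<Longrightarrow> (f p, f q) \<in> S\<^sup>*"
  shows "(f a, f b) \<in> S\<^sup>*"
  using assms(1)
proof (induction rule: rtrancl_induct)
  case base then show ?case by simp
next
  case (step y z) then show ?case using assms(2)[of y z] rtrancl_trans by fast
qed

lemma conn_mono:
  assumes "connected_in F S" and "\<And>a b. a \<in> S \<Longrightarrow> b \<in> S \<Longrightarrow> {a, b} \<in> F \<Longrightarrow> {a, b} \<in> F'"
  shows "connected_in F' S"
proof -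
  have "crel F S \<subseteq> crel F' S" using assms(2) by (auto simp: crel_def)
  then have "(crel F S)\<^sup>* \<subseteq> (crel F' S)\<^sup>*" by (rule rtrancl_mono)
  then show ?thesis using assms(1) unfolding conn_iff by blast
qed

lemma conn_single: "connected_in F {a}"
  by (simp add: connected_in_def)

lemma conn_empty: "connected_in F {}"
  by (simp add: connected_in_def)

lemma conn_union:
  assumes c1: "connected_in F S1" and c2: "connected_in F S2" and a: "a \<in> S1" and b: "b \<in> S2"
    and ab: "a = b \<or> {a, b} \<in> F"
  shows "connected_in F (S1 \<union> S2)"
proof -
  let ?R = "crel F (S1 \<union> S2)"
  have m1: "(crel F S1)\<^sup>* \<subseteq> ?R\<^sup>*" by (rule rtrancl_mono) (auto simp: crel_def)
  have m2: "(crel F S2)\<^sup>* \<subseteq> ?R\<^sup>*" by (rule rtrancl_mono) (auto simp: crel_def)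
  have ab1: "(a, b) \<in> ?R\<^sup>*" using ab a b by (auto simp: crel_def)
  have ba1: "(b, a) \<in> ?R\<^sup>*" using ab a b by (auto simp: crel_def insert_commute)
  have 1: "(x, y) \<in> ?R\<^sup>*" if "x \<in> S1" "y \<in> S1" for x y using that c1 m1 by (auto simp: conn_iff)
  have 2: "(x, y) \<in> ?R\<^sup>*" if "x \<in> S2" "y \<in> S2" for x y using that c2 m2 by (auto simp: conn_iff)
  show ?thesis unfolding conn_iff
  proof (intro ballI)
    fix x y assume x: "x \<in> S1 \<union> S2" and y: "y \<in> S1 \<union> S2"
    show "(x, y) \<in> ?R\<^sup>*"
    proof (cases "x \<in> S1")
      case True
      show ?thesis
      proof (cases "y \<in> S1")
        case True with \<open>x \<in> S1\<close> show ?thesis using 1 by blast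
      next
        case False then have "y \<in> S2" using y by blast
        then show ?thesis using rtrancl_trans[OF rtrancl_trans[OF 1[OF True a] ab1] 2[OF b]] by blast
      qed
    next
      case False then have xs: "x \<in> S2" using x by blast
      show ?thesis
      proof (cases "y \<in> S2")
        case True with xs show ?thesis using 2 by blast
      next
        case False then have "y \<in> S1" using y by blast
        then show ?thesis using rtrancl_trans[OF rtrancl_trans[OF 2[OF xs b] ba1] 1[OF a]] by blast
      qed
    qed
  qed
qed

lemma conn_step:
  assumes "connected_in F S" "a \<in> S" "b \<in> S" "a \<noteq> b"
  shows "\<exists>c\<in>S. {a, c} \<in> F"
proof -
  have "(a, b) \<in> (crel F S)\<^sup>*" using assms(1-3) unfolding conn_iff by blast
  then obtain c where "(a, c) \<in> crel F S" using assms(4) by (cases rule: converse_rtranclE) auto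
  then show ?thesis by (auto simp: crel_def)
qed

lemma conn_map:
  assumes "connected_in F S"
    and "\<And>a. a \<in> S \<Longrightarrow> r a \<in> S'"
    and "\<And>p q. p \<in> S \<Longrightarrow> q \<in> S \<Longrightarrow> {p, q} \<in> F \<Longrightarrow> r p = r q \<or> {r p, r q} \<in> F'"
    and "\<And>a. a \<in> S' \<Longrightarrow> \<exists>b\<in>S. r b = a"
  shows "connected_in F' S'"
  unfolding conn_iff
proof (intro ballI)
  fix x y assume x: "x \<in> S'" and y: "y \<in> S'"
  obtain a b where a: "a \<in> S" "r a = x" and b: "b \<in> S" "r b = y" using assms(4) x y by blast
  have ab: "(a, b) \<in> (crel F S)\<^sup>*" using a b assms(1) unfolding conn_iff by blast
  have "(r a, r b) \<in> (crel F' S')\<^sup>*"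
  proof (rule rtrancl_map_gen[OF ab])
    fix p q assume "(p, q) \<in> crel F S"
    then have pq: "p \<in> S" "q \<in> S" "{p, q} \<in> F" by (auto simp: crel_def)
    then have "r p = r q \<or> {r p, r q} \<in> F'" using assms(3) by blast
    have "r p \<in> S'" "r q \<in> S'" using assms(2) pq by auto
    then show "(r p, r q) \<in> (crel F' S')\<^sup>*"
      using \<open>r p = r q \<or> {r p, r q} \<in> F'\<close> unfolding crel_def by auto
  qed
  then show "(x, y) \<in> (crel F' S')\<^sup>*" using a b by simp
qed

lemma simple_edge:
  assumes "simple_graph G" "{a, b} \<in> snd G"
  shows "a \<noteq> b \<and> a \<in> fst G \<and> b \<in> fst G"
proof -
  have "\<forall>e\<in>snd G. \<exists>u v. u \<noteq> v \<and> e = {u, v} \<and> u \<in> fst G \<and> v \<in> fst G"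
    using assms(1) unfolding simple_graph_def by (rule conjunct2)
  then obtain u v where "u \<noteq> v" "{a, b} = {u, v}" "u \<in> fst G" "v \<in> fst G"
    using assms(2) by blast
  then show ?thesis by (auto simp: doubleton_eq_iff)
qed

lemma simple_edge_sub:
  assumes "simple_graph G" "e \<in> snd G"
  shows "e \<subseteq> fst G"
proof -
  have "\<forall>e\<in>snd G. \<exists>u v. u \<noteq> v \<and> e = {u, v} \<and> u \<in> fst G \<and> v \<in> fst G"
    using assms(1) unfolding simple_graph_def by (rule conjunct2)
  then obtain u v where "e = {u, v}" "u \<in> fst G" "v \<in> fst G"
    using assms(2) by blast
  then show ?thesis by simp
qed

lemma simple_finV: "simple_graph G \<Longrightarrow> finite (fst G)"
  unfolding simple_graph_def by (rule conjunct1)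

lemma simple_finE: "simple_graph G \<Longrightarrow> finite (snd G)"
proof -
  assume G: "simple_graph G"
  have "snd G \<subseteq> Pow (fst G)" using simple_edge_sub[OF G] by blast
  then show ?thesis using simple_finV[OF G] finite_subset by blast
qed

definition nb :: "'a graph \<Rightarrow> 'a \<Rightarrow> 'a set" where
  "nb G x = {w. {x, w} \<in> snd G}"

lemma degree_nb: "degree G x = card (nb G x)"
  by (simp add: degree_def nb_def)

lemma nb_sub: "simple_graph G \<Longrightarrow> nb G x \<subseteq> fst G"
  unfolding nb_def using simple_edge by fastforce

lemma nb_fin: "simple_graph G \<Longrightarrow> finite (nb G x)"
  using nb_sub simple_finV finite_subset by metis

lemma simple_intro:
  assumes "finite V" "\<And>e. e \<in> E \<Longrightarrow> \<exists>u v. u \<noteq> v \<and> e = {u, v} \<and> u \<in> V \<and> v \<in> V"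
  shows "simple_graph (V, E)"
  using assms unfolding simple_graph_def by simp

lemma simple_elim:
  assumes "simple_graph G" "e \<in> snd G"
  obtains u v where "u \<noteq> v" "e = {u, v}" "u \<in> fst G" "v \<in> fst G"
proof -
  have "\<forall>e\<in>snd G. \<exists>u v. u \<noteq> v \<and> e = {u, v} \<and> u \<in> fst G \<and> v \<in> fst G"
    using assms(1) unfolding simple_graph_def by (rule conjunct2)
  then show ?thesis using assms(2) that by blast
qed

lemma contract_fst: "fst (contract G u v) = fst G - {u}"
  by (simp add: contract_def)

lemma contract_snd: "e \<in> snd (contract G u v) \<longleftrightarrow>
   (e \<in> snd G \<and> u \<notin> e) \<or> (\<exists>w. e = {v, w} \<and> {u, w} \<in> snd G \<and> w \<noteq> v)"
  by (auto simp: contract_def)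

lemma simple_contract:
  assumes G: "simple_graph G" and uv: "{u, v} \<in> snd G"
  shows "simple_graph (contract G u v)"
proof -
  have uv': "u \<noteq> v" "u \<in> fst G" "v \<in> fst G" using simple_edge[OF assms] by auto
  have "simple_graph (fst G - {u}, snd (contract G u v))"
  proof (rule simple_intro)
    show "finite (fst G - {u})" using simple_finV[OF G] by simp
  next
    fix e assume "e \<in> snd (contract G u v)"
    then consider "e \<in> snd G" "u \<notin> e" | w where "e = {v, w}" "{u, w} \<in> snd G" "w \<noteq> v"
      unfolding contract_snd by blast
    then show "\<exists>a b. a \<noteq> b \<and> e = {a, b} \<and> a \<in> fst G - {u} \<and> b \<in> fst G - {u}"
    proof cases
      case 1
      then obtain a b where "a \<noteq> b" "e = {a, b}" "a \<in> fst G" "b \<in> fst G"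
        using simple_elim[OF G] by metis
      then show ?thesis using 1 by auto
    next
      case 2
      then have "w \<in> fst G" "w \<noteq> u" using simple_edge[OF G 2(2)] by auto
      then show ?thesis using 2 uv' by auto
    qed
  qed
  moreover have "contract G u v = (fst G - {u}, snd (contract G u v))"
    by (simp add: contract_def)
  ultimately show ?thesis by simp
qed

lemma is_minor_simple: "is_minor G H \<Longrightarrow> simple_graph G \<Longrightarrow> simple_graph H"
proof (induction rule: is_minor.induct)
  case (refl G) then show ?case by simp
next
  case (sub G H H') then show ?case unfolding subgraph_def by blast
next
  case (contr G H u v) then show ?case using simple_contract by metis
qed

lemma is_minor_trans: "is_minor G' H' \<Longrightarrow> is_minor G G' \<Longrightarrow> is_minor G H'"
proof (induction rule: is_minor.induct)
  case (refl G') then show ?case by simp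
next
  case (sub G' H H') then show ?case by (metis is_minor.sub)
next
  case (contr G' H u v) then show ?case by (metis is_minor.contr)
qed



lemma td_intro:
  assumes "is_tree T" "\<And>v. v \<in> fst G \<Longrightarrow> \<exists>t\<in>fst T. v \<in> B t"
    "\<And>e. e \<in> snd G \<Longrightarrow> \<exists>t\<in>fst T. e \<subseteq> B t"
    "\<And>v. v \<in> fst G \<Longrightarrow> connected_in (snd T) {t\<in>fst T. v \<in> B t}"
  shows "tree_decomposition G T B"
  using assms unfolding tree_decomposition_def by blast

lemma td_tree: "tree_decomposition G T B \<Longrightarrow> is_tree T"
  unfolding tree_decomposition_def by (rule conjunct1)

lemma td_vert: "tree_decomposition G T B \<Longrightarrow> v \<in> fst G \<Longrightarrow> \<exists>t\<in>fst T. v \<in> B t"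
  unfolding tree_decomposition_def by blast

lemma td_edge: "tree_decomposition G T B \<Longrightarrow> e \<in> snd G \<Longrightarrow> \<exists>t\<in>fst T. e \<subseteq> B t"
  unfolding tree_decomposition_def by blast

lemma td_conn: "tree_decomposition G T B \<Longrightarrow> v \<in> fst G \<Longrightarrow> connected_in (snd T) {t\<in>fst T. v \<in> B t}"
  unfolding tree_decomposition_def by blast

lemma htw_intro:
  assumes "tree_decomposition G T B" "\<And>t. t \<in> fst T \<Longrightarrow> card (B t) \<le> k + 1 \<and> finite (B t)"
  shows "has_tw_at_most G k"
  using assms unfolding has_tw_at_most_def by blast

lemma htw_elim:
  assumes "has_tw_at_most G k"
  obtains T B where "tree_decomposition G T B" "\<And>t. t \<in> fst T \<Longrightarrow> card (B t) \<le> k + 1" 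
    "\<And>t. t \<in> fst T \<Longrightarrow> finite (B t)"
  using assms unfolding has_tw_at_most_def by blast

lemma tree_single: "is_tree ({0}, {})"
  unfolding is_tree_def simple_graph_def connected_in_def by simp

lemma tw_exists:
  assumes "simple_graph G" shows "has_tw_at_most G (card (fst G))"
proof (rule htw_intro)
  show "tree_decomposition G ({0}, {}) (\<lambda>_. fst G)"
  proof (rule td_intro)
    show "is_tree ({0::nat}, {})" by (rule tree_single)
  next
    fix e assume "e \<in> snd G" then show "\<exists>t\<in>fst ({0::nat}, {}). e \<subseteq> fst G"
      using simple_edge_sub[OF assms] by simp
  next
    fix v assume "v \<in> fst G"
    then have "{t \<in> fst ({0::nat}, {}). v \<in> fst G} = {0}" by simp
    then show "connected_in (snd ({0::nat}, {})) {t \<in> fst ({0::nat}, {}). v \<in> fst G}"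
      using conn_single by metis
  qed simp
next
  fix t show "card (fst G) \<le> card (fst G) + 1 \<and> finite (fst G)" using simple_finV[OF assms] by simp
qed

lemma tw_has: "simple_graph G \<Longrightarrow> has_tw_at_most G (treewidth G)"
  unfolding treewidth_def by (rule LeastI_ex) (use tw_exists in blast)

lemma tw_le: "has_tw_at_most G w \<Longrightarrow> treewidth G \<le> w"
  unfolding treewidth_def by (rule Least_le)

lemma tw_sub:
  assumes "subgraph H G" "has_tw_at_most G w" shows "has_tw_at_most H w"
proof -
  obtain T B where td: "tree_decomposition G T B" and w: "\<And>t. t \<in> fst T \<Longrightarrow> card (B t) \<le> w + 1"
    "\<And>t. t \<in> fst T \<Longrightarrow> finite (B t)"
    using htw_elim[OF assms(2)] by metis
  have HG: "fst H \<subseteq> fst G" "snd H \<subseteq> snd G" using assms(1) unfolding subgraph_def by auto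
  have "tree_decomposition H T B"
  proof (rule td_intro)
    show "is_tree T" using td_tree[OF td] .
  next
    fix v assume "v \<in> fst H" then show "\<exists>t\<in>fst T. v \<in> B t" using td_vert[OF td] HG by blast
  next
    fix e assume "e \<in> snd H" then show "\<exists>t\<in>fst T. e \<subseteq> B t" using td_edge[OF td] HG by blast
  next
    fix v assume "v \<in> fst H" then show "connected_in (snd T) {t \<in> fst T. v \<in> B t}"
      using td_conn[OF td] HG by blast
  qed
  then show ?thesis using w by (intro htw_intro) auto
qed

lemma img_r1: "u \<noteq> v \<Longrightarrow> v \<in> (\<lambda>a. if a = u then v else a) ` S \<longleftrightarrow> (v \<in> S \<or> u \<in> S)"
  by (auto simp: image_iff split: if_splits)

lemma img_r2: "x \<noteq> u \<Longrightarrow> x \<noteq> v \<Longrightarrow> x \<in> (\<lambda>a. if a = u then v else a) ` S \<longleftrightarrow> x \<in> S"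
  by (auto simp: image_iff split: if_splits)

lemma tw_contract:
  assumes G: "simple_graph G" and uv: "{u, v} \<in> snd G" and h: "has_tw_at_most G w"
  shows "has_tw_at_most (contract G u v) w"
proof -
  obtain T B where td: "tree_decomposition G T B" and w: "\<And>t. t \<in> fst T \<Longrightarrow> card (B t) \<le> w + 1"
    "\<And>t. t \<in> fst T \<Longrightarrow> finite (B t)"
    using htw_elim[OF h] by metis
  have uv': "u \<noteq> v" "u \<in> fst G" "v \<in> fst G" using simple_edge[OF G uv] by auto
  define r where "r a = (if a = u then v else a)" for a
  define B' where "B' t = r ` B t" for t
  have "tree_decomposition (contract G u v) T B'"
  proof (rule td_intro)
    show "is_tree T" using td_tree[OF td] .
  next
    fix x assume "x \<in> fst (contract G u v)"
    then have x: "x \<in> fst G" "x \<noteq> u" by (auto simp: contract_fst)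
    then obtain t where "t \<in> fst T" "x \<in> B t" using td_vert[OF td] by blast
    moreover have "r x = x" using x unfolding r_def by simp
    ultimately show "\<exists>t\<in>fst T. x \<in> B' t" unfolding B'_def by (metis image_eqI)
  next
    fix e assume "e \<in> snd (contract G u v)"
    then consider "e \<in> snd G" "u \<notin> e" | y where "e = {v, y}" "{u, y} \<in> snd G" "y \<noteq> v"
      unfolding contract_snd by blast
    then show "\<exists>t\<in>fst T. e \<subseteq> B' t"
    proof cases
      case 1
      then obtain t where "t \<in> fst T" "e \<subseteq> B t" using td_edge[OF td] by blast
      moreover have "r ` e = e" using 1 unfolding r_def by auto
      ultimately have "e \<subseteq> B' t" unfolding B'_def using image_mono by metis
      then show ?thesis using \<open>t \<in> fst T\<close> by blast
    next
      case 2
      then obtain t where t: "t \<in> fst T" "{u, y} \<subseteq> B t" using td_edge[OF td] by blast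
      have "y \<noteq> u" using simple_edge[OF G 2(2)] by auto
      then have "r u = v" "r y = y" unfolding r_def by auto
      then have "r ` {u, y} = {v, y}" by simp
      then have "{v, y} \<subseteq> B' t" using t(2) unfolding B'_def using image_mono by metis
      then show ?thesis using t 2 by blast
    qed
  next
    fix x assume "x \<in> fst (contract G u v)"
    then have x: "x \<in> fst G" "x \<noteq> u" by (auto simp: contract_fst)
    show "connected_in (snd T) {t \<in> fst T. x \<in> B' t}"
    proof (cases "x = v")
      case True
      have eq: "{t \<in> fst T. x \<in> B' t} = {t \<in> fst T. v \<in> B t} \<union> {t \<in> fst T. u \<in> B t}"
        using True uv' img_r1[of u v] unfolding B'_def r_def[abs_def] by auto
      obtain t where t: "t \<in> fst T" "{u, v} \<subseteq> B t" using td_edge[OF td uv] by blast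
      have c1: "connected_in (snd T) {t \<in> fst T. v \<in> B t}" using td_conn[OF td uv'(3)] .
      have c2: "connected_in (snd T) {t \<in> fst T. u \<in> B t}" using td_conn[OF td uv'(2)] .
      have "t \<in> {t \<in> fst T. v \<in> B t}" "t \<in> {t \<in> fst T. u \<in> B t}" using t by auto
      then show ?thesis unfolding eq using conn_union[OF c1 c2] by blast
    next
      case False
      have eq: "{t \<in> fst T. x \<in> B' t} = {t \<in> fst T. x \<in> B t}"
        using False x img_r2[of x u v] unfolding B'_def r_def[abs_def] by auto
      show ?thesis unfolding eq using td_conn[OF td x(1)] .
    qed
  qed
  moreover have "card (B' t) \<le> w + 1 \<and> finite (B' t)" if "t \<in> fst T" for t
    using w[OF that] card_image_le[of "B t" r] unfolding B'_def by auto
  ultimately show ?thesis by (rule htw_intro)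
qed

lemma tw_minor: "is_minor G H \<Longrightarrow> simple_graph G \<Longrightarrow> has_tw_at_most G w \<Longrightarrow> has_tw_at_most H w"
proof (induction rule: is_minor.induct)
  case (refl G) then show ?case by simp
next
  case (sub G H H') then show ?case using tw_sub[OF sub.hyps(2)] by blast
next
  case (contr G H u v)
  have "simple_graph H" using is_minor_simple contr by metis
  then show ?case using tw_contract[OF _ contr.hyps(2)] contr.IH contr.prems by blast
qed



lemma tree_parts:
  assumes "is_tree T"
  shows "simple_graph T" "fst T \<noteq> {}" "connected_in (snd T) (fst T)" "card (snd T) + 1 = card (fst T)"
  using assms unfolding is_tree_def by auto

lemma tw_extend:
  assumes G: "simple_graph G" and x: "x \<in> fst G" and dx: "card (nb G x) \<le> 2"
    and td: "tree_decomposition G' T B" and w: "\<And>t. t \<in> fst T \<Longrightarrow> card (B t) \<le> k + 1"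
    "\<And>t. t \<in> fst T \<Longrightarrow> finite (B t)"
    and inj: "inj_on \<phi> (fst G - {x})" and mapV: "\<And>v. v \<in> fst G - {x} \<Longrightarrow> \<phi> v \<in> fst G'"
    and mapE: "\<And>a b. {a, b} \<in> snd G \<Longrightarrow> a \<noteq> x \<Longrightarrow> b \<noteq> x \<Longrightarrow> {\<phi> a, \<phi> b} \<in> snd G'"
    and t0: "t0 \<in> fst T" "\<phi> ` nb G x \<subseteq> B t0"
  shows "has_tw_at_most G (max k 2)"
proof -
  have tree: "is_tree T" using td_tree[OF td] .
  note tp = tree_parts[OF tree]
  have finT: "finite (fst T)" using simple_finV[OF tp(1)] .
  obtain n :: nat where n: "n \<notin> fst T" using ex_new_if_finite[OF infinite_UNIV_nat finT] by blast
  have t0n: "t0 \<noteq> n" using t0 n by auto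
  define T' where "T' = (insert n (fst T), insert {t0, n} (snd T))"
  define B' where "B' t = (if t = n then insert x (nb G x) else {a \<in> fst G - {x}. \<phi> a \<in> B t})" for t
  have sT': "snd T \<subseteq> snd T'" unfolding T'_def by auto
  have tree': "is_tree T'"
  proof -
    have s: "simple_graph T'"
    proof -
      have "simple_graph (insert n (fst T), insert {t0, n} (snd T))"
      proof (rule simple_intro)
        show "finite (insert n (fst T))" using finT by simp
      next
        fix e assume "e \<in> insert {t0, n} (snd T)"
        then show "\<exists>u v. u \<noteq> v \<and> e = {u, v} \<and> u \<in> insert n (fst T) \<and> v \<in> insert n (fst T)"
        proof
          assume "e = {t0, n}" then show ?thesis using t0n t0 by blast
        next
          assume "e \<in> snd T"
          then obtain u v where "u \<noteq> v" "e = {u, v}" "u \<in> fst T" "v \<in> fst T"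
            using simple_elim[OF tp(1)] by metis
          then show ?thesis by blast
        qed
      qed
      then show ?thesis unfolding T'_def .
    qed
    have c: "connected_in (snd T') (fst T')"
    proof -
      have c1: "connected_in (snd T') (fst T)" using conn_mono[OF tp(3)] sT' by blast
      have c2: "connected_in (snd T') {n}" by (rule conn_single)
      have e: "{t0, n} \<in> snd T'" unfolding T'_def by simp
      have "connected_in (snd T') (fst T \<union> {n})" using conn_union[OF c1 c2 t0(1)] e by blast
      moreover have "fst T \<union> {n} = fst T'" unfolding T'_def by auto
      ultimately show ?thesis by simp
    qed
    have nE: "{t0, n} \<notin> snd T" using simple_edge[OF tp(1), of t0 n] n by blast
    have "card (snd T') = Suc (card (snd T))" unfolding T'_def using nE simple_finE[OF tp(1)] by simp
    moreover have "card (fst T') = Suc (card (fst T))" unfolding T'_def using n finT by simp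
    ultimately have "card (snd T') + 1 = card (fst T')" using tp(4) by simp
    moreover have "fst T' \<noteq> {}" unfolding T'_def by simp
    ultimately show ?thesis unfolding is_tree_def using s c by blast
  qed
  have nbx: "nb G x \<subseteq> fst G" "finite (nb G x)" "x \<notin> nb G x"
    using nb_sub[OF G] nb_fin[OF G] simple_edge[OF G, of x x] unfolding nb_def by auto
  have td': "tree_decomposition G T' B'"
  proof (rule td_intro)
    show "is_tree T'" by (rule tree')
  next
    fix v assume v: "v \<in> fst G"
    show "\<exists>t\<in>fst T'. v \<in> B' t"
    proof (cases "v = x")
      case True then show ?thesis unfolding T'_def B'_def by auto
    next
      case False
      then obtain t where t: "t \<in> fst T" "\<phi> v \<in> B t" using td_vert[OF td mapV] v by blast
      then have "t \<noteq> n" using n by auto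
      then have "v \<in> B' t" using t False v unfolding B'_def by auto
      then show ?thesis using t unfolding T'_def by auto
    qed
  next
    fix e assume e: "e \<in> snd G"
    then obtain a b where ab: "a \<noteq> b" "e = {a, b}" "a \<in> fst G" "b \<in> fst G" using simple_elim[OF G] by metis
    show "\<exists>t\<in>fst T'. e \<subseteq> B' t"
    proof (cases "a = x \<or> b = x")
      case True
      then have "e \<subseteq> B' n" using ab e unfolding B'_def nb_def by (auto simp: insert_commute)
      then show ?thesis unfolding T'_def by auto
    next
      case False
      then obtain t where t: "t \<in> fst T" "{\<phi> a, \<phi> b} \<subseteq> B t" using td_edge[OF td mapE] e ab by blast
      then have "t \<noteq> n" using n by auto
      then have "e \<subseteq> B' t" using t False ab unfolding B'_def by auto
      then show ?thesis using t unfolding T'_def by auto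
    qed
  next
    fix v assume v: "v \<in> fst G"
    show "connected_in (snd T') {t \<in> fst T'. v \<in> B' t}"
    proof (cases "v = x")
      case True
      have "{t \<in> fst T'. v \<in> B' t} = {n}" using True n unfolding T'_def B'_def by auto
      then show ?thesis using conn_single by metis
    next
      case False
      let ?S1 = "{t \<in> fst T. \<phi> v \<in> B t}"
      have c1: "connected_in (snd T') ?S1" using conn_mono[OF td_conn[OF td mapV]] v False sT' by blast
      show ?thesis
      proof (cases "v \<in> nb G x")
        case True
        have eq: "{t \<in> fst T'. v \<in> B' t} = ?S1 \<union> {n}"
          using True False v n unfolding T'_def B'_def by auto
        have "t0 \<in> ?S1" using t0 True by auto
        moreover have "{t0, n} \<in> snd T'" unfolding T'_def by simp
        ultimately show ?thesis unfolding eq using conn_union[OF c1 conn_single] by blast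
      next
        case nv: False
        have eq: "{t \<in> fst T'. v \<in> B' t} = ?S1"
          using nv False v n unfolding T'_def B'_def by auto
        show ?thesis unfolding eq by (rule c1)
      qed
    qed
  qed
  show ?thesis
  proof (rule htw_intro[OF td'])
    fix t assume t: "t \<in> fst T'"
    show "card (B' t) \<le> max k 2 + 1 \<and> finite (B' t)"
    proof (cases "t = n")
      case True
      have "card (insert x (nb G x)) \<le> Suc (card (nb G x))" using nbx(2) by (simp add: card_insert_if)
      then show ?thesis using True dx nbx unfolding B'_def by auto
    next
      case False
      then have tT: "t \<in> fst T" using t unfolding T'_def by auto
      have sub: "\<phi> ` {a \<in> fst G - {x}. \<phi> a \<in> B t} \<subseteq> B t" by auto
      have "inj_on \<phi> {a \<in> fst G - {x}. \<phi> a \<in> B t}" using inj by (rule inj_on_subset) auto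
      then have "card {a \<in> fst G - {x}. \<phi> a \<in> B t} \<le> card (B t)"
        using card_inj_on_le[OF _ sub w(2)[OF tT]] by blast
      moreover have "finite {a \<in> fst G - {x}. \<phi> a \<in> B t}" using simple_finV[OF G] by simp
      ultimately show ?thesis using w(1)[OF tT] False unfolding B'_def by auto
    qed
  qed
qed

lemma nb_cases:
  assumes "finite A" "y \<in> A" "card A \<le> 2"
  shows "A = {y} \<or> (\<exists>z. z \<noteq> y \<and> A = {y, z})"
proof -
  have "card (A - {y}) \<le> Suc 0" using assms by simp
  then have all: "\<forall>a\<in>A - {y}. \<forall>b\<in>A - {y}. a = b" using card_le_Suc0_iff_eq[of "A - {y}"] assms(1) by blast
  show ?thesis
  proof (cases "A - {y} = {}")
    case True then have "A = {y}" using assms(2) by blast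
    then show ?thesis by blast
  next
    case False
    then obtain z where z: "z \<in> A - {y}" by blast
    then have "A - {y} = {z}" using all by blast
    then have "A = {y, z}" using assms(2) by blast
    then show ?thesis using z by blast
  qed
qed

lemma tw_contract_back:
  assumes G: "simple_graph G" and e: "{x, y} \<in> snd G" and dx: "card (nb G x) \<le> 2"
    and h: "has_tw_at_most (contract G x y) k"
  shows "has_tw_at_most G (max k 2)"
proof -
  obtain T B where td: "tree_decomposition (contract G x y) T B"
    and w: "\<And>t. t \<in> fst T \<Longrightarrow> card (B t) \<le> k + 1" "\<And>t. t \<in> fst T \<Longrightarrow> finite (B t)"
    using htw_elim[OF h] by metis
  have xy: "x \<noteq> y" "x \<in> fst G" "y \<in> fst G" using simple_edge[OF G e] by auto
  have yn: "y \<in> nb G x" using e unfolding nb_def by simp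
  have "\<exists>t0\<in>fst T. id ` nb G x \<subseteq> B t0"
  proof -
    consider "nb G x = {y}" | z where "z \<noteq> y" "nb G x = {y, z}"
      using nb_cases[OF nb_fin[OF G] yn dx] by blast
    then show ?thesis
    proof cases
      case 1
      have "y \<in> fst (contract G x y)" using xy by (simp add: contract_fst)
      then obtain t where "t \<in> fst T" "y \<in> B t" using td_vert[OF td] by blast
      then show ?thesis using 1 by auto
    next
      case 2
      have "z \<in> nb G x" using 2 by simp
      then have "{x, z} \<in> snd G" unfolding nb_def by simp
      then have "{y, z} \<in> snd (contract G x y)" unfolding contract_snd using 2 by blast
      then obtain t where "t \<in> fst T" "{y, z} \<subseteq> B t" using td_edge[OF td] by blast
      then show ?thesis using 2 by auto
    qed
  qed
  then obtain t0 where t0: "t0 \<in> fst T" "id ` nb G x \<subseteq> B t0" by blast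
  show ?thesis
  proof (rule tw_extend[OF G xy(2) dx td w _ _ _ t0])
    show "inj_on id (fst G - {x})" by simp
  next
    fix v assume "v \<in> fst G - {x}" then show "id v \<in> fst (contract G x y)" by (simp add: contract_fst)
  next
    fix a b assume "{a, b} \<in> snd G" "a \<noteq> x" "b \<noteq> x"
    then show "{id a, id b} \<in> snd (contract G x y)" unfolding contract_snd by simp
  qed
qed

lemma tw_contract_back2:
  assumes G: "simple_graph G" and e: "{x, y} \<in> snd G" and dx: "card (nb G x) \<le> 2"
    and h: "has_tw_at_most (contract G y x) k"
  shows "has_tw_at_most G (max k 2)"
proof -
  obtain T B where td: "tree_decomposition (contract G y x) T B"
    and w: "\<And>t. t \<in> fst T \<Longrightarrow> card (B t) \<le> k + 1" "\<And>t. t \<in> fst T \<Longrightarrow> finite (B t)"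
    using htw_elim[OF h] by metis
  have xy: "x \<noteq> y" "x \<in> fst G" "y \<in> fst G" using simple_edge[OF G e] by auto
  have yn: "y \<in> nb G x" using e unfolding nb_def by simp
  define \<phi> where "\<phi> a = (if a = y then x else a)" for a
  have "\<exists>t0\<in>fst T. \<phi> ` nb G x \<subseteq> B t0"
  proof -
    consider "nb G x = {y}" | z where "z \<noteq> y" "nb G x = {y, z}"
      using nb_cases[OF nb_fin[OF G] yn dx] by blast
    then show ?thesis
    proof cases
      case 1
      have "x \<in> fst (contract G y x)" using xy by (simp add: contract_fst)
      then obtain t where "t \<in> fst T" "x \<in> B t" using td_vert[OF td] by blast
      then show ?thesis using 1 unfolding \<phi>_def by auto
    next
      case 2
      have "z \<in> nb G x" using 2 by simp
      then have xz: "{x, z} \<in> snd G" unfolding nb_def by simp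
      then have "x \<noteq> z" using simple_edge[OF G xz] by simp
      then have "{x, z} \<in> snd (contract G y x)" unfolding contract_snd using 2 xz xy by blast
      then obtain t where "t \<in> fst T" "{x, z} \<subseteq> B t" using td_edge[OF td] by blast
      then show ?thesis using 2 unfolding \<phi>_def by auto
    qed
  qed
  then obtain t0 where t0: "t0 \<in> fst T" "\<phi> ` nb G x \<subseteq> B t0" by blast
  show ?thesis
  proof (rule tw_extend[OF G xy(2) dx td w _ _ _ t0])
    show "inj_on \<phi> (fst G - {x})" unfolding inj_on_def \<phi>_def by auto
  next
    fix v assume "v \<in> fst G - {x}" then show "\<phi> v \<in> fst (contract G y x)"
      using xy unfolding \<phi>_def by (simp add: contract_fst)
  next
    fix a b assume ab: "{a, b} \<in> snd G" "a \<noteq> x" "b \<noteq> x"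
    have anb: "a \<noteq> b" using simple_edge[OF G ab(1)] by simp
    show "{\<phi> a, \<phi> b} \<in> snd (contract G y x)"
    proof (cases "a = y")
      case True
      then have "{\<phi> a, \<phi> b} = {x, b}" using anb unfolding \<phi>_def by simp
      moreover have "{y, b} \<in> snd G" using ab True by simp
      ultimately show ?thesis unfolding contract_snd using ab by blast
    next
      case False
      show ?thesis
      proof (cases "b = y")
        case True
        then have "{\<phi> a, \<phi> b} = {x, a}" using anb unfolding \<phi>_def by auto
        moreover have "{y, a} \<in> snd G" using ab True by (simp add: insert_commute)
        ultimately show ?thesis unfolding contract_snd using ab by blast
      next
        case bF: False
        then have "{\<phi> a, \<phi> b} = {a, b}" using False unfolding \<phi>_def by simp
        then show ?thesis unfolding contract_snd using ab False bF by auto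
      qed
    qed
  qed
qed

definition del :: "'a graph \<Rightarrow> 'a \<Rightarrow> 'a graph" where
  "del G x = (fst G - {x}, snd G)"

lemma del_simple:
  assumes G: "simple_graph G" and n: "nb G x = {}"
  shows "simple_graph (del G x)" "subgraph (del G x) G"
proof -
  show s: "simple_graph (del G x)" unfolding del_def
  proof (rule simple_intro)
    show "finite (fst G - {x})" using simple_finV[OF G] by simp
  next
    fix e assume e: "e \<in> snd G"
    then obtain a b where ab: "a \<noteq> b" "e = {a, b}" "a \<in> fst G" "b \<in> fst G" using simple_elim[OF G] by metis
    have "a \<noteq> x" using n e ab unfolding nb_def by auto
    moreover have "b \<noteq> x" using n e ab unfolding nb_def by (auto simp: insert_commute)
    ultimately show "\<exists>u v. u \<noteq> v \<and> e = {u, v} \<and> u \<in> fst G - {x} \<and> v \<in> fst G - {x}"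
      using ab by blast
  qed
  show "subgraph (del G x) G" unfolding subgraph_def using s by (auto simp: del_def)
qed

lemma tw_del_back:
  assumes G: "simple_graph G" and x: "x \<in> fst G" and n: "nb G x = {}"
    and h: "has_tw_at_most (del G x) k"
  shows "has_tw_at_most G (max k 2)"
proof -
  obtain T B where td: "tree_decomposition (del G x) T B"
    and w: "\<And>t. t \<in> fst T \<Longrightarrow> card (B t) \<le> k + 1" "\<And>t. t \<in> fst T \<Longrightarrow> finite (B t)"
    using htw_elim[OF h] by metis
  obtain t0 where t0: "t0 \<in> fst T" using tree_parts(2)[OF td_tree[OF td]] by blast
  have t0': "id ` nb G x \<subseteq> B t0" using n by simp
  have dx: "card (nb G x) \<le> 2" using n by simp
  show ?thesis
  proof (rule tw_extend[OF G x dx td w _ _ _ t0 t0'])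
    show "inj_on id (fst G - {x})" by simp
  next
    fix v assume "v \<in> fst G - {x}" then show "id v \<in> fst (del G x)" by (simp add: del_def)
  next
    fix a b assume "{a, b} \<in> snd G" "a \<noteq> x" "b \<noteq> x"
    then show "{id a, id b} \<in> snd (del G x)" by (simp add: del_def)
  qed
qed



definition modelled :: "'a graph \<Rightarrow> 'a graph \<Rightarrow> ('a \<Rightarrow> 'a set) \<Rightarrow> bool" where
  "modelled G H X \<longleftrightarrow> (\<forall>h\<in>fst H. h \<in> X h \<and> X h \<subseteq> fst G \<and> connected_in (snd G) (X h)) \<and>
     (\<forall>h\<in>fst H. \<forall>h'\<in>fst H. h \<noteq> h' \<longrightarrow> X h \<inter> X h' = {}) \<and>
     (\<forall>h h'. {h, h'} \<in> snd H \<longrightarrow> (\<exists>a\<in>X h. \<exists>b\<in>X h'. {a, b} \<in> snd G))"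

lemma m_intro:
  assumes "\<And>h. h \<in> fst H \<Longrightarrow> h \<in> X h" "\<And>h. h \<in> fst H \<Longrightarrow> X h \<subseteq> fst G"
    "\<And>h. h \<in> fst H \<Longrightarrow> connected_in (snd G) (X h)"
    "\<And>h h'. h \<in> fst H \<Longrightarrow> h' \<in> fst H \<Longrightarrow> h \<noteq> h' \<Longrightarrow> X h \<inter> X h' = {}"
    "\<And>h h'. {h, h'} \<in> snd H \<Longrightarrow> \<exists>a\<in>X h. \<exists>b\<in>X h'. {a, b} \<in> snd G"
  shows "modelled G H X"
  using assms unfolding modelled_def by blast

lemma m_root: "modelled G H X \<Longrightarrow> h \<in> fst H \<Longrightarrow> h \<in> X h"
  unfolding modelled_def by blast
lemma m_sub: "modelled G H X \<Longrightarrow> h \<in> fst H \<Longrightarrow> X h \<subseteq> fst G"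
  unfolding modelled_def by blast
lemma m_conn: "modelled G H X \<Longrightarrow> h \<in> fst H \<Longrightarrow> connected_in (snd G) (X h)"
  unfolding modelled_def by blast
lemma m_disj: "modelled G H X \<Longrightarrow> h \<in> fst H \<Longrightarrow> h' \<in> fst H \<Longrightarrow> h \<noteq> h' \<Longrightarrow> X h \<inter> X h' = {}"
  unfolding modelled_def by blast
lemma m_edge: "modelled G H X \<Longrightarrow> {h, h'} \<in> snd H \<Longrightarrow> \<exists>a\<in>X h. \<exists>b\<in>X h'. {a, b} \<in> snd G"
  unfolding modelled_def by blast

lemma minor_model: "is_minor G H \<Longrightarrow> simple_graph G \<Longrightarrow> \<exists>X. modelled G H X"
proof (induction rule: is_minor.induct)
  case (refl G)
  have "modelled G G (\<lambda>h. {h})"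
  proof (rule m_intro)
    fix h h' assume "{h, h'} \<in> snd G" then show "\<exists>a\<in>{h}. \<exists>b\<in>{h'}. {a, b} \<in> snd G" by simp
  qed (auto intro: conn_single)
  then show ?case by blast
next
  case (sub G H H')
  then obtain X where X: "modelled G H X" by blast
  have HH: "fst H' \<subseteq> fst H" "snd H' \<subseteq> snd H" using sub.hyps(2) unfolding subgraph_def by auto
  have "modelled G H' X"
  proof (rule m_intro)
    fix h assume "h \<in> fst H'" then have h: "h \<in> fst H" using HH by blast
    show "h \<in> X h" using m_root[OF X h] .
    show "X h \<subseteq> fst G" using m_sub[OF X h] .
    show "connected_in (snd G) (X h)" using m_conn[OF X h] .
  next
    fix h h' assume "h \<in> fst H'" "h' \<in> fst H'" "h \<noteq> h'"
    then show "X h \<inter> X h' = {}" using m_disj[OF X] HH by blast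
  next
    fix h h' assume "{h, h'} \<in> snd H'"
    then show "\<exists>a\<in>X h. \<exists>b\<in>X h'. {a, b} \<in> snd G" using m_edge[OF X] HH by blast
  qed
  then show ?case by blast
next
  case (contr G H u v)
  then obtain X where X: "modelled G H X" by blast
  have H: "simple_graph H" using is_minor_simple contr by metis
  have uv: "u \<noteq> v" "u \<in> fst H" "v \<in> fst H" using simple_edge[OF H contr.hyps(2)] by auto
  define X' where "X' = X(v := X u \<union> X v)"
  have sup: "X h \<subseteq> X' h" for h unfolding X'_def by auto
  have "modelled G (contract H u v) X'"
  proof (rule m_intro)
    fix h assume "h \<in> fst (contract H u v)" then have h: "h \<in> fst H" "h \<noteq> u" by (auto simp: contract_fst)
    show "h \<in> X' h" using m_root[OF X h(1)] sup by blast
    show "X' h \<subseteq> fst G" using m_sub[OF X h(1)] m_sub[OF X uv(2)] unfolding X'_def by auto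
    show "connected_in (snd G) (X' h)"
    proof (cases "h = v")
      case True
      obtain a b where ab: "a \<in> X u" "b \<in> X v" "{a, b} \<in> snd G" using m_edge[OF X contr.hyps(2)] by blast
      have "connected_in (snd G) (X u \<union> X v)"
        using conn_union[OF m_conn[OF X uv(2)] m_conn[OF X uv(3)] ab(1) ab(2)] ab(3) by blast
      then show ?thesis using True unfolding X'_def by simp
    next
      case False then show ?thesis using m_conn[OF X h(1)] unfolding X'_def by simp
    qed
  next
    fix h h' assume hh: "h \<in> fst (contract H u v)" "h' \<in> fst (contract H u v)" "h \<noteq> h'"
    then have hh': "h \<in> fst H" "h' \<in> fst H" "h \<noteq> u" "h' \<noteq> u" by (auto simp: contract_fst)
    show "X' h \<inter> X' h' = {}"
    proof (cases "h = v")
      case True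
      then have "h' \<noteq> v" using hh by blast
      then show ?thesis using True m_disj[OF X] hh hh' uv unfolding X'_def by auto
    next
      case False
      show ?thesis
      proof (cases "h' = v")
        case True
        then show ?thesis using False m_disj[OF X] hh hh' uv unfolding X'_def by auto
      next
        case False2: False
        then show ?thesis using False m_disj[OF X] hh hh' unfolding X'_def by auto
      qed
    qed
  next
    fix h h' assume "{h, h'} \<in> snd (contract H u v)"
    then consider "{h, h'} \<in> snd H" | w where "{h, h'} = {v, w}" "{u, w} \<in> snd H" "w \<noteq> v"
      unfolding contract_snd by blast
    then show "\<exists>a\<in>X' h. \<exists>b\<in>X' h'. {a, b} \<in> snd G"
    proof cases
      case 1 then show ?thesis using m_edge[OF X 1] sup by blast
    next
      case 2
      obtain a b where ab: "a \<in> X u" "b \<in> X w" "{a, b} \<in> snd G" using m_edge[OF X 2(2)] by blast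
      have "a \<in> X' v" "b \<in> X' w" using ab sup unfolding X'_def by auto
      moreover have "{b, a} \<in> snd G" using ab(3) by (simp add: insert_commute)
      ultimately show ?thesis using 2(1) ab(3) by (auto simp: doubleton_eq_iff)
    qed
  qed
  then show ?case by blast
qed



lemma m_edgeV: "simple_graph H \<Longrightarrow> {h, h'} \<in> snd H \<Longrightarrow> h \<in> fst H \<and> h' \<in> fst H \<and> h \<noteq> h'"
proof -
  assume a: "simple_graph H" "{h, h'} \<in> snd H"
  have "h \<noteq> h' \<and> h \<in> fst H \<and> h' \<in> fst H" by (rule simple_edge[OF a])
  then show ?thesis by simp
qed

lemma m_same: "modelled G H X \<Longrightarrow> h1 \<in> fst H \<Longrightarrow> h2 \<in> fst H \<Longrightarrow> a \<in> X h1 \<Longrightarrow> a \<in> X h2 \<Longrightarrow> h1 = h2"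
proof -
  assume a: "modelled G H X" "h1 \<in> fst H" "h2 \<in> fst H" "a \<in> X h1" "a \<in> X h2"
  show "h1 = h2"
  proof (rule ccontr)
    assume "h1 \<noteq> h2"
    then have "X h1 \<inter> X h2 = {}" by (rule m_disj[OF a(1-3)])
    then show False using a(4,5) by blast
  qed
qed

lemma model_restrict:
  assumes X: "modelled G H X" and H: "simple_graph H" and s: "\<And>h. h \<in> fst H \<Longrightarrow> X h \<subseteq> fst G'"
    and e: "\<And>e. e \<in> snd G \<Longrightarrow> e \<subseteq> fst G' \<Longrightarrow> e \<in> snd G'"
  shows "modelled G' H X"
proof (rule m_intro)
  fix h assume h: "h \<in> fst H"
  show "h \<in> X h" using m_root[OF X h] .
  show "X h \<subseteq> fst G'" using s[OF h] .
  show "connected_in (snd G') (X h)"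
  proof (rule conn_mono[OF m_conn[OF X h]])
    fix a b assume "a \<in> X h" "b \<in> X h" "{a, b} \<in> snd G"
    then show "{a, b} \<in> snd G'" using e s[OF h] by blast
  qed
next
  fix h h' assume "h \<in> fst H" "h' \<in> fst H" "h \<noteq> h'"
  then show "X h \<inter> X h' = {}" using m_disj[OF X] by blast
next
  fix h h' assume hh: "{h, h'} \<in> snd H"
  then obtain a b where ab: "a \<in> X h" "b \<in> X h'" "{a, b} \<in> snd G" using m_edge[OF X] by blast
  have "h \<in> fst H" "h' \<in> fst H" using m_edgeV[OF H hh] by auto
  then have "{a, b} \<in> snd G'" using e ab s by blast
  then show "\<exists>a\<in>X h. \<exists>b\<in>X h'. {a, b} \<in> snd G'" using ab by blast
qed

lemma contract_r_edge:
  assumes G: "simple_graph G" and pq: "{p, q} \<in> snd G"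
    and ne: "(if p = u then v else p) \<noteq> (if q = u then v else q)"
  shows "{(if p = u then v else p), (if q = u then v else q)} \<in> snd (contract G u v)"
proof -
  have "p \<noteq> q" using simple_edge[OF G pq] by simp
  show ?thesis
  proof (cases "p = u")
    case True
    then have "q \<noteq> u" "q \<noteq> v" using \<open>p \<noteq> q\<close> ne by auto
    then show ?thesis using True pq unfolding contract_snd by auto
  next
    case False
    show ?thesis
    proof (cases "q = u")
      case True
      then have "p \<noteq> v" using False ne by auto
      moreover have "{u, p} \<in> snd G" using pq True by (simp add: insert_commute)
      ultimately show ?thesis using True False unfolding contract_snd by (auto simp: insert_commute)
    next
      case False2: False
      then show ?thesis using False pq unfolding contract_snd by auto
    qed
  qed
qed

lemma model_contract_inside:
  assumes X: "modelled G H X" and G: "simple_graph G" and H: "simple_graph H"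
    and e: "{u, v} \<in> snd G" and h0: "h0 \<in> fst H" "u \<in> X h0" "v \<in> X h0" "u \<noteq> h0"
  shows "modelled (contract G u v) H (X(h0 := X h0 - {u}))"
proof -
  define X' where "X' = X(h0 := X h0 - {u})"
  define r where "r a = (if a = u then v else a)" for a
  have uv: "u \<noteq> v" using simple_edge[OF G e] by simp
  have notu: "u \<notin> X h" if "h \<in> fst H" "h \<noteq> h0" for h using m_disj[OF X that(1) h0(1) that(2)] h0 by blast
  have ru: "r a \<noteq> u" for a unfolding r_def using uv by auto
  have rX0: "r a \<in> X h" if "h \<in> fst H" "a \<in> X h" for a h
  proof (cases "a = u")
    case True
    have "h = h0"
    proof (rule ccontr)
      assume "h \<noteq> h0" then have "u \<notin> X h" by (rule notu[OF that(1)])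
      then show False using True that(2) by simp
    qed
    then show ?thesis using True h0(3) unfolding r_def by simp
  next
    case False then show ?thesis using that(2) unfolding r_def by simp
  qed
  have rX: "r a \<in> X' h" if "h \<in> fst H" "a \<in> X h" for a h
  proof (cases "h = h0")
    case True
    then have "X' h = X h0 - {u}" unfolding X'_def by simp
    then show ?thesis using rX0[OF that] ru[of a] True by simp
  next
    case False
    then have "X' h = X h" unfolding X'_def by simp
    then show ?thesis using rX0[OF that] by simp
  qed
  have "modelled (contract G u v) H X'"
  proof (rule m_intro)
    fix h assume h: "h \<in> fst H"
    show "h \<in> X' h"
    proof (cases "h = h0")
      case True then show ?thesis using m_root[OF X h] h0(4) unfolding X'_def by simp
    next
      case False then show ?thesis using m_root[OF X h] unfolding X'_def by simp
    qed
    show "X' h \<subseteq> fst (contract G u v)"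
    proof (cases "h = h0")
      case True then show ?thesis using m_sub[OF X h] unfolding X'_def contract_fst by auto
    next
      case False then show ?thesis using m_sub[OF X h] notu[OF h False] unfolding X'_def contract_fst by auto
    qed
    show "connected_in (snd (contract G u v)) (X' h)"
    proof (cases "h = h0")
      case True
      have "connected_in (snd (contract G u v)) (X h0 - {u})"
      proof (rule conn_map[OF m_conn[OF X h0(1)], of r])
        fix a assume "a \<in> X h0" then show "r a \<in> X h0 - {u}" using h0 uv unfolding r_def by auto
      next
        fix p q assume "p \<in> X h0" "q \<in> X h0" "{p, q} \<in> snd G"
        then show "r p = r q \<or> {r p, r q} \<in> snd (contract G u v)"
          using contract_r_edge[OF G, of p q u v] unfolding r_def by blast
      next
        fix a assume "a \<in> X h0 - {u}" then show "\<exists>b\<in>X h0. r b = a" unfolding r_def by auto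
      qed
      then show ?thesis using True unfolding X'_def by simp
    next
      case False
      have "connected_in (snd (contract G u v)) (X h)"
      proof (rule conn_mono[OF m_conn[OF X h]])
        fix a b assume "a \<in> X h" "b \<in> X h" "{a, b} \<in> snd G"
        then show "{a, b} \<in> snd (contract G u v)" using notu[OF h False] unfolding contract_snd by auto
      qed
      then show ?thesis using False unfolding X'_def by simp
    qed
  next
    fix h h' assume "h \<in> fst H" "h' \<in> fst H" "h \<noteq> h'"
    then have "X h \<inter> X h' = {}" using m_disj[OF X] by blast
    then show "X' h \<inter> X' h' = {}" unfolding X'_def by auto
  next
    fix h h' assume hh: "{h, h'} \<in> snd H"
    have hh': "h \<in> fst H" "h' \<in> fst H" "h \<noteq> h'" using m_edgeV[OF H hh] by auto
    obtain a b where ab: "a \<in> X h" "b \<in> X h'" "{a, b} \<in> snd G" using m_edge[OF X hh] by blast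
    have ra: "r a \<in> X h" by (rule rX0[OF hh'(1) ab(1)])
    have rb: "r b \<in> X h'" by (rule rX0[OF hh'(2) ab(2)])
    have dj: "X h \<inter> X h' = {}" by (rule m_disj[OF X hh'])
    have ne: "r a \<noteq> r b"
    proof
      assume "r a = r b"
      then have "r a \<in> X h \<inter> X h'" using ra rb by simp
      then show False using dj by simp
    qed
    have ne': "(if a = u then v else a) \<noteq> (if b = u then v else b)" using ne unfolding r_def .
    have "{(if a = u then v else a), (if b = u then v else b)} \<in> snd (contract G u v)"
      by (rule contract_r_edge[OF G ab(3) ne'])
    then have "{r a, r b} \<in> snd (contract G u v)" unfolding r_def .
    moreover have "r a \<in> X' h" by (rule rX[OF hh'(1) ab(1)])
    moreover have "r b \<in> X' h'" by (rule rX[OF hh'(2) ab(2)])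
    ultimately show "\<exists>a\<in>X' h. \<exists>b\<in>X' h'. {a, b} \<in> snd (contract G u v)" by blast
  qed
  then show ?thesis unfolding X'_def .
qed



lemma model_deg:
  assumes X: "modelled G H X" and G: "simple_graph G" and H: "simple_graph H"
    and h: "h \<in> fst H" and md: "min_degree_ge H 3" and x: "x \<in> X h" and dx: "degree G x < 3"
  shows "\<exists>y\<in>X h. {x, y} \<in> snd G"
proof (rule ccontr)
  assume no: "\<not> (\<exists>y\<in>X h. {x, y} \<in> snd G)"
  have Xh: "X h \<subseteq> {x}"
  proof
    fix c assume c: "c \<in> X h"
    show "c \<in> {x}"
    proof (rule ccontr)
      assume "c \<notin> {x}"
      then have "x \<noteq> c" by simp
      then obtain d where "d \<in> X h" "{x, d} \<in> snd G" using conn_step[OF m_conn[OF X h] x c] by blast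
      then show False using no by blast
    qed
  qed
  have wit: "\<exists>b. b \<in> X w \<and> b \<in> nb G x" if w: "w \<in> nb H h" for w
  proof -
    have "{h, w} \<in> snd H" using w unfolding nb_def by simp
    then obtain a b where ab: "a \<in> X h" "b \<in> X w" "{a, b} \<in> snd G" using m_edge[OF X] by blast
    then have "a = x" using Xh by blast
    then show ?thesis using ab unfolding nb_def by blast
  qed
  define g where "g w = (SOME b. b \<in> X w \<and> b \<in> nb G x)" for w
  have g: "g w \<in> X w \<and> g w \<in> nb G x" if "w \<in> nb H h" for w
    unfolding g_def using someI_ex[OF wit[OF that]] .
  have wH: "w \<in> fst H" if "w \<in> nb H h" for w
    using that nb_sub[OF H] by blast
  have inj: "inj_on g (nb H h)"
  proof (rule inj_onI)
    fix w1 w2 assume w: "w1 \<in> nb H h" "w2 \<in> nb H h" "g w1 = g w2"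
    have "g w1 \<in> X w1" using g[OF w(1)] by simp
    moreover have "g w1 \<in> X w2" using g[OF w(2)] w(3) by simp
    ultimately show "w1 = w2" using m_same[OF X wH[OF w(1)] wH[OF w(2)]] by blast
  qed
  have "g ` nb H h \<subseteq> nb G x" using g by blast
  then have "card (nb H h) \<le> card (nb G x)" using card_inj_on_le[OF inj _ nb_fin[OF G]] by blast
  moreover have "3 \<le> card (nb H h)" using md h unfolding min_degree_ge_def degree_nb by blast
  ultimately show False using dx unfolding degree_nb by simp
qed

lemma model_base:
  assumes X: "modelled G H X" and G: "simple_graph G" and H: "simple_graph H"
    and md: "min_degree_ge G 3" and c: "card (snd G) \<le> card (snd H)"
  shows "H = G"
proof -
  define P where "P e d \<longleftrightarrow> d \<in> snd G \<and> (\<exists>h h' a b. e = {h, h'} \<and> h \<in> fst H \<and> h' \<in> fst H \<and> h \<noteq> h' \<and>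
      a \<in> X h \<and> b \<in> X h' \<and> d = {a, b})" for e d
  define f where "f e = (SOME d. P e d)" for e
  have exP: "\<exists>d. P e d" if e: "e \<in> snd H" for e
  proof -
    obtain h h' where hh: "h \<noteq> h'" "e = {h, h'}" "h \<in> fst H" "h' \<in> fst H" using simple_elim[OF H e] by metis
    obtain a b where ab: "a \<in> X h" "b \<in> X h'" "{a, b} \<in> snd G" using m_edge[OF X] e hh(2) by blast
    show ?thesis unfolding P_def using hh ab by blast
  qed
  have fP: "P e (f e)" if "e \<in> snd H" for e unfolding f_def using someI_ex[OF exP[OF that]] .
  have inj: "inj_on f (snd H)"
  proof (rule inj_onI)
    fix e1 e2 assume e: "e1 \<in> snd H" "e2 \<in> snd H" "f e1 = f e2"
    obtain h1 h1' a1 b1 where o1: "e1 = {h1, h1'}" "h1 \<in> fst H" "h1' \<in> fst H" "a1 \<in> X h1" "b1 \<in> X h1'" "f e1 = {a1, b1}"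
      using fP[OF e(1)] unfolding P_def by blast
    obtain h2 h2' a2 b2 where o2: "e2 = {h2, h2'}" "h2 \<in> fst H" "h2' \<in> fst H" "a2 \<in> X h2" "b2 \<in> X h2'" "f e2 = {a2, b2}"
      using fP[OF e(2)] unfolding P_def by blast
    have "{a1, b1} = {a2, b2}" using o1(6) o2(6) e(3) by simp
    then consider "a1 = a2" "b1 = b2" | "a1 = b2" "b1 = a2" by (auto simp: doubleton_eq_iff)
    then show "e1 = e2"
    proof cases
      case 1
      have "h1 = h2" using m_same[OF X o1(2) o2(2) o1(4)] o2(4) 1(1) by simp
      moreover have "h1' = h2'" using m_same[OF X o1(3) o2(3) o1(5)] o2(5) 1(2) by simp
      ultimately show ?thesis using o1(1) o2(1) by simp
    next
      case 2
      have "h1 = h2'" using m_same[OF X o1(2) o2(3) o1(4)] o2(5) 2(1) by simp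
      moreover have "h1' = h2" using m_same[OF X o1(3) o2(2) o1(5)] o2(4) 2(2) by simp
      ultimately show ?thesis using o1(1) o2(1) by (simp add: insert_commute)
    qed
  qed
  have fG: "f ` snd H \<subseteq> snd G" using fP unfolding P_def by blast
  have "card (f ` snd H) = card (snd H)" using card_image[OF inj] .
  then have fonto: "f ` snd H = snd G" using card_seteq[OF simple_finE[OF G] fG] c by simp
  have cover: "\<exists>h h'. h \<in> fst H \<and> h' \<in> fst H \<and> h \<noteq> h' \<and> {h, h'} \<in> snd H \<and> (\<exists>a b. a \<in> X h \<and> b \<in> X h' \<and> d = {a, b})"
    if d: "d \<in> snd G" for d
  proof -
    obtain e where e: "e \<in> snd H" "d = f e" using d fonto by blast
    then show ?thesis using fP[OF e(1)] unfolding P_def by blast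
  qed
  have single: "X h = {h}" if h: "h \<in> fst H" for h
  proof (rule ccontr)
    assume "X h \<noteq> {h}"
    then obtain c where c: "c \<in> X h" "c \<noteq> h" using m_root[OF X h] by blast
    obtain c' where c': "c' \<in> X h" "{h, c'} \<in> snd G"
      using conn_step[OF m_conn[OF X h] m_root[OF X h] c(1)] c(2) by metis
    obtain h1 h2 a b where hh: "h1 \<in> fst H" "h2 \<in> fst H" "h1 \<noteq> h2" "a \<in> X h1" "b \<in> X h2" "{h, c'} = {a, b}"
      using cover[OF c'(2)] by blast
    have hX: "h \<in> X h" by (rule m_root[OF X h])
    from hh(6) consider "h = a" "c' = b" | "h = b" "c' = a" by (auto simp: doubleton_eq_iff)
    then show False
    proof cases
      case 1
      have "h1 = h" using m_same[OF X hh(1) h hh(4)] hX 1(1) by simp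
      moreover have "h2 = h" using m_same[OF X hh(2) h hh(5)] c'(1) 1(2) by simp
      ultimately show False using hh(3) by simp
    next
      case 2
      have "h1 = h" using m_same[OF X hh(1) h hh(4)] c'(1) 2(2) by simp
      moreover have "h2 = h" using m_same[OF X hh(2) h hh(5)] hX 2(1) by simp
      ultimately show False using hh(3) by simp
    qed
  qed
  have EG: "snd G \<subseteq> snd H"
  proof
    fix d assume d: "d \<in> snd G"
    obtain h h' a b where hh: "h \<in> fst H" "h' \<in> fst H" "{h, h'} \<in> snd H" "a \<in> X h" "b \<in> X h'" "d = {a, b}"
      using cover[OF d] by blast
    then have "a = h" "b = h'" using single by auto
    then show "d \<in> snd H" using hh by simp
  qed
  have EH: "snd H \<subseteq> snd G"
  proof
    fix e assume e: "e \<in> snd H"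
    obtain h h' where hh: "h \<noteq> h'" "e = {h, h'}" "h \<in> fst H" "h' \<in> fst H" using simple_elim[OF H e] by metis
    obtain a b where ab: "a \<in> X h" "b \<in> X h'" "{a, b} \<in> snd G" using m_edge[OF X] e hh(2) by blast
    then have "a = h" "b = h'" using single hh by auto
    then show "e \<in> snd G" using ab hh by simp
  qed
  have VH: "fst H \<subseteq> fst G" using m_sub[OF X] m_root[OF X] by blast
  have VG: "fst G \<subseteq> fst H"
  proof
    fix v assume v: "v \<in> fst G"
    then have "3 \<le> card (nb G v)" using md unfolding min_degree_ge_def degree_nb by blast
    then obtain w where "w \<in> nb G v" by fastforce
    then have d: "{v, w} \<in> snd G" unfolding nb_def by simp
    then have "{v, w} \<in> snd H" using EG by blast
    then show "v \<in> fst H" using simple_edge[OF H] by blast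
  qed
  show ?thesis using EG EH VG VH by (simp add: prod_eq_iff)
qed



lemma reduce:
  assumes G: "simple_graph G" and X: "modelled G H X" and H: "simple_graph H"
    and md: "min_degree_ge H 3" and x: "x \<in> fst G" and dx: "degree G x < 3"
  shows "\<exists>G' X'. simple_graph G' \<and> is_minor G G' \<and> card (fst G') < card (fst G) \<and> modelled G' H X' \<and>
     (\<forall>w. has_tw_at_most G' w \<longrightarrow> has_tw_at_most G (max w 2))"
proof -
  have dx2: "card (nb G x) \<le> 2" using dx unfolding degree_nb by simp
  have finV: "finite (fst G)" by (rule simple_finV[OF G])
  have cardx: "card (fst G - {x}) < card (fst G)" using card_Diff1_less[OF finV x] .
  show ?thesis
  proof (cases "\<exists>h\<in>fst H. x \<in> X h")
    case False
    show ?thesis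
    proof (cases "nb G x = {}")
      case True
      have s: "simple_graph (del G x)" and sg: "subgraph (del G x) G" using del_simple[OF G True] by auto
      have m: "is_minor G (del G x)" using is_minor.sub[OF is_minor.refl sg] .
      have c: "card (fst (del G x)) < card (fst G)" using cardx by (simp add: del_def)
      have mo: "modelled (del G x) H X"
      proof (rule model_restrict[OF X H])
        fix h assume "h \<in> fst H" then show "X h \<subseteq> fst (del G x)"
          using m_sub[OF X] False by (auto simp: del_def)
      next
        fix e assume "e \<in> snd G" then show "e \<in> snd (del G x)" by (simp add: del_def)
      qed
      have "\<forall>w. has_tw_at_most (del G x) w \<longrightarrow> has_tw_at_most G (max w 2)"
        using tw_del_back[OF G x True] by blast
      then show ?thesis using s m c mo by blast
    next
      case nbne: False
      then obtain y where y: "y \<in> nb G x" by blast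
      then have e: "{x, y} \<in> snd G" unfolding nb_def by simp
      have xy: "x \<noteq> y" using simple_edge[OF G e] by simp
      have s: "simple_graph (contract G x y)" by (rule simple_contract[OF G e])
      have m: "is_minor G (contract G x y)" by (rule is_minor.contr[OF is_minor.refl e xy])
      have c: "card (fst (contract G x y)) < card (fst G)" using cardx by (simp add: contract_fst)
      have mo: "modelled (contract G x y) H X"
      proof (rule model_restrict[OF X H])
        fix h assume "h \<in> fst H" then show "X h \<subseteq> fst (contract G x y)"
          using m_sub[OF X] False by (auto simp: contract_fst)
      next
        fix e assume "e \<in> snd G" "e \<subseteq> fst (contract G x y)" then show "e \<in> snd (contract G x y)"
          unfolding contract_snd contract_fst by blast
      qed
      have "\<forall>w. has_tw_at_most (contract G x y) w \<longrightarrow> has_tw_at_most G (max w 2)"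
        using tw_contract_back[OF G e dx2] by blast
      then show ?thesis using s m c mo by blast
    qed
  next
    case True
    then obtain h where h: "h \<in> fst H" "x \<in> X h" by blast
    obtain y where y: "y \<in> X h" "{x, y} \<in> snd G" using model_deg[OF X G H h(1) md h(2) dx] by blast
    have xy: "x \<noteq> y" "y \<in> fst G" using simple_edge[OF G y(2)] by auto
    show ?thesis
    proof (cases "x = h")
      case False
      have s: "simple_graph (contract G x y)" by (rule simple_contract[OF G y(2)])
      have m: "is_minor G (contract G x y)" by (rule is_minor.contr[OF is_minor.refl y(2) xy(1)])
      have c: "card (fst (contract G x y)) < card (fst G)" using cardx by (simp add: contract_fst)
      have mo: "modelled (contract G x y) H (X(h := X h - {x}))"
        by (rule model_contract_inside[OF X G H y(2) h(1) h(2) y(1) False])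
      have "\<forall>w. has_tw_at_most (contract G x y) w \<longrightarrow> has_tw_at_most G (max w 2)"
        using tw_contract_back[OF G y(2) dx2] by blast
      then show ?thesis using s m c mo by blast
    next
      case True
      have e': "{y, x} \<in> snd G" using y(2) by (simp add: insert_commute)
      have yx: "y \<noteq> x" using xy by simp
      have s: "simple_graph (contract G y x)" by (rule simple_contract[OF G e'])
      have m: "is_minor G (contract G y x)" by (rule is_minor.contr[OF is_minor.refl e' yx])
      have c: "card (fst (contract G y x)) < card (fst G)"
        using card_Diff1_less[OF finV xy(2)] by (simp add: contract_fst)
      have yh: "y \<noteq> h" using True yx by simp
      have mo: "modelled (contract G y x) H (X(h := X h - {y}))"
        by (rule model_contract_inside[OF X G H e' h(1) y(1) h(2) yh])
      have "\<forall>w. has_tw_at_most (contract G y x) w \<longrightarrow> has_tw_at_most G (max w 2)"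
        using tw_contract_back2[OF G y(2) dx2] by blast
      then show ?thesis using s m c mo by blast
    qed
  qed
qed

lemma main:
  assumes "simple_graph G" "simple_graph H" "min_degree_ge H 3" "modelled G H X"
    "\<forall>H'. is_minor G H' \<and> min_degree_ge H' 3 \<longrightarrow> card (snd H') \<le> card (snd H)"
  shows "treewidth G \<le> max (treewidth H) 2"
  using assms
proof (induction "card (fst G)" arbitrary: G X rule: less_induct)
  case less
  show ?case
  proof (cases "min_degree_ge G 3")
    case True
    have "card (snd G) \<le> card (snd H)" using less.prems(5) is_minor.refl[of G] True by blast
    then have "H = G" by (rule model_base[OF less.prems(4,1,2) True])
    then show ?thesis by simp
  next
    case False
    then obtain x where x: "x \<in> fst G" "degree G x < 3" unfolding min_degree_ge_def by auto
    obtain G' X' where G': "simple_graph G'" "is_minor G G'" "card (fst G') < card (fst G)" "modelled G' H X'"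
      "\<forall>w. has_tw_at_most G' w \<longrightarrow> has_tw_at_most G (max w 2)"
      using reduce[OF less.prems(1,4,2,3) x] by blast
    have mx: "\<forall>H'. is_minor G' H' \<and> min_degree_ge H' 3 \<longrightarrow> card (snd H') \<le> card (snd H)"
      using less.prems(5) is_minor_trans G'(2) by blast
    have IH: "treewidth G' \<le> max (treewidth H) 2"
      by (rule less.hyps[OF G'(3) G'(1) less.prems(2,3) G'(4) mx])
    have "has_tw_at_most G (max (treewidth G') 2)" using G'(5) tw_has[OF G'(1)] by blast
    then have "treewidth G \<le> max (treewidth G') 2" by (rule tw_le)
    then show ?thesis using IH by simp
  qed
qed

theorem theorem23:
  fixes G H :: "'a graph" and k :: nat
  assumes "simple_graph G"
    and "treewidth G = k"
    and "k \<ge> 3"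
    and "minor_3_core G H"
  shows "treewidth H = k"
proof -
  have m: "is_minor G H" and md: "min_degree_ge H 3"
    and mx: "\<forall>H'. is_minor G H' \<and> min_degree_ge H' 3 \<longrightarrow> card (snd H') \<le> card (snd H)"
    using assms(4) unfolding minor_3_core_def by auto
  have H: "simple_graph H" by (rule is_minor_simple[OF m assms(1)])
  obtain X where X: "modelled G H X" using minor_model[OF m assms(1)] by blast
  have 1: "treewidth G \<le> max (treewidth H) 2" by (rule main[OF assms(1) H md X mx])
  have "has_tw_at_most H (treewidth G)" by (rule tw_minor[OF m assms(1) tw_has[OF assms(1)]])
  then have 2: "treewidth H \<le> treewidth G" by (rule tw_le)
  show ?thesis using 1 2 assms(2,3) by simp
qed

end
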